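(* For the SSBM of the context with $k\ge2$ clusters of general sizes $(n_1,\dots,n_k)$ and aspect ratio $\rho$ satisfying $\sqrt\rho>1-\frac1{4k(2+\sqrt k)}$, it holds that $V_{k-1}(\mathcal L_{sym})=\Theta R_{k-1}$, where $R_{k-1}\in\mathbb R^{k\times(k-1)}$ consists of the $k-1$ smallest (orthonormal) eigenvectors of $\bar C$. Furthermore, $$\lambda_{n-k+1}(\mathcal L_{sym})-\lambda_{n-k+2}(\mathcal L_{sym})\ge\frac{1-2\eta}k.$$
   Context: SSBM: integers $n\ge2,k\ge2$, $p\in(0,1]$, $\eta\in[0,1/2)$, partition of $[n]$ into nonempty clusters $C_1,\dots,C_k$, $|C_i|=n_i$; edges present independently w.p. $p$, signed $+1$ within and $-1$ across clusters, signs flipped independently w.p. $\eta$. $A$ symmetric signed adjacency, $\bar D=\mathrm{diag}(|A|\mathbf1)$, $\bar d=p(n-1)$, $\mathcal L_{sym}=I-(\mathbb E\bar D)^{-1/2}\mathbb EA(\mathbb E\bar D)^{-1/2}$ with eigenvalues $\lambda_1\ge\dots\ge\lambda_n$. $\rho=\min_in_i/\max_in_i$. $\Theta_{ji}=1/\sqrt{n_i}$ if $j\in C_i$ else 0. $V_{k-1}(M)$: $n\times(k-1)$ matrix of orthonormal eigenvectors of the $k-1$ smallest eigenvalues. $\bar\alpha=1+\frac p{\bar d}(1-2\eta)$, $\bar C=\bar\alpha I_k-\bar B$ with $\bar B_{ii}=\frac{n_ip}{\bar d}(1-2\eta)$, $\bar B_{ii'}=-\frac{\sqrt{n_in_{i'}}p}{\bar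 d}(1-2\eta)$ for $i\ne i'$. *)

theory Defs
  imports "Jordan_Normal_Form.Char_Poly" "HOL-Probability.Probability_Mass_Function"
begin

text \<open>Vertices are 0,...,n-1 and clusters are 0,...,k-1.  The partition into
clusters is given by an assignment cl :: nat => nat (vertex j lies in cluster cl j).\<close>

definition valid_partition :: "nat \<Rightarrow> nat \<Rightarrow> (nat \<Rightarrow> nat) \<Rightarrow> bool" where
  "valid_partition n k cl \<longleftrightarrow> (\<forall>j<n. cl j < k) \<and> (\<forall>i<k. \<exists>j<n. cl j = i)"

definition csize :: "nat \<Rightarrow> (nat \<Rightarrow> nat) \<Rightarrow> nat \<Rightarrow> nat" where
  "csize n cl i = card {j. j < n \<and> cl j = i}"

definition aspect_ratio :: "nat \<Rightarrow> nat \<Rightarrow> (nat \<Rightarrow> nat) \<Rightarrow> real" where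
  "aspect_ratio n k cl =
     real (Min (csize n cl ` {..<k})) / real (Max (csize n cl ` {..<k}))"

text \<open>Distribution of the signed adjacency entry A_jl (j \<noteq> l) in the SSBM:
an edge is present w.p. p, its sign is +1 within and -1 across clusters,
and this sign is flipped w.p. eta.\<close>
definition entry_pmf :: "real \<Rightarrow> real \<Rightarrow> (nat \<Rightarrow> nat) \<Rightarrow> nat \<Rightarrow> nat \<Rightarrow> real pmf" where
  "entry_pmf p \<eta> cl j l =
     bind_pmf (bernoulli_pmf p) (\<lambda>e. bind_pmf (bernoulli_pmf \<eta>) (\<lambda>f.
       return_pmf (if e then (let s = (if cl j = cl l then 1 else -1) in if f then - s else s)
                   else 0)))"

definition EA :: "nat \<Rightarrow> real \<Rightarrow> real \<Rightarrow> (nat \<Rightarrow> nat) \<Rightarrow> real mat" where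
  "EA n p \<eta> cl = Matrix.mat n n (\<lambda>(j,l). if j = l then 0
       else measure_pmf.expectation (entry_pmf p \<eta> cl j l) (\<lambda>x. x))"

definition EDbar :: "nat \<Rightarrow> real \<Rightarrow> real \<Rightarrow> (nat \<Rightarrow> nat) \<Rightarrow> real mat" where
  "EDbar n p \<eta> cl = Matrix.mat n n (\<lambda>(j,l). if j = l then
       (\<Sum>m\<in>{..<n} - {j}. measure_pmf.expectation (entry_pmf p \<eta> cl j m) (\<lambda>x. \<bar>x\<bar>))
       else 0)"

definition diag_inv_sqrt :: "real mat \<Rightarrow> real mat" where
  "diag_inv_sqrt D = Matrix.mat (dim_row D) (dim_row D)
      (\<lambda>(i,j). if i = j then 1 / sqrt (D $$ (i,i)) else 0)"

definition Lsym :: "nat \<Rightarrow> real \<Rightarrow> real \<Rightarrow> (nat \<Rightarrow> nat) \<Rightarrow> real mat" where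
  "Lsym n p \<eta> cl = 1\<^sub>m n - diag_inv_sqrt (EDbar n p \<eta> cl) * EA n p \<eta> cl * diag_inv_sqrt (EDbar n p \<eta> cl)"

definition eigs_desc :: "real mat \<Rightarrow> real list" where
  "eigs_desc M = (THE xs. length xs = dim_row M \<and> sorted_wrt (\<ge>) xs \<and>
       char_poly M = prod_list (map (\<lambda>x. [:- x, 1:]) xs))"

text \<open>lambda_i(M), 1-indexed as in the paper.\<close>
definition eig :: "real mat \<Rightarrow> nat \<Rightarrow> real" where
  "eig M i = eigs_desc M ! (i - 1)"

text \<open>V is a valid choice of V_m(M): an (dim M) x m matrix with orthonormal columns
that are eigenvectors of M for its m smallest eigenvalues; column j (0-indexed)
belongs to lambda_{N-j}(M), i.e. columns ordered by increasing eigenvalue.\<close>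
definition is_bottom_eigvecs :: "real mat \<Rightarrow> nat \<Rightarrow> real mat \<Rightarrow> bool" where
  "is_bottom_eigvecs M m V \<longleftrightarrow>
     dim_row V = dim_row M \<and> dim_col V = m \<and> transpose_mat V * V = 1\<^sub>m m \<and>
     (\<forall>j<m. M *\<^sub>v col V j = eig M (dim_row M - j) \<cdot>\<^sub>v col V j)"

definition Theta :: "nat \<Rightarrow> nat \<Rightarrow> (nat \<Rightarrow> nat) \<Rightarrow> real mat" where
  "Theta n k cl = Matrix.mat n k (\<lambda>(j,i). if cl j = i then 1 / sqrt (real (csize n cl i)) else 0)"

definition dbar :: "nat \<Rightarrow> real \<Rightarrow> real" where
  "dbar n p = p * (real n - 1)"

definition alphabar :: "nat \<Rightarrow> real \<Rightarrow> real \<Rightarrow> real" where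
  "alphabar n p \<eta> = 1 + p / dbar n p * (1 - 2 * \<eta>)"

definition Bbar :: "nat \<Rightarrow> nat \<Rightarrow> real \<Rightarrow> real \<Rightarrow> (nat \<Rightarrow> nat) \<Rightarrow> real mat" where
  "Bbar n k p \<eta> cl = Matrix.mat k k (\<lambda>(i,i'). if i = i' then real (csize n cl i) * p / dbar n p * (1 - 2 * \<eta>)
      else - sqrt (real (csize n cl i) * real (csize n cl i')) * p / dbar n p * (1 - 2 * \<eta>))"

definition Cbar :: "nat \<Rightarrow> nat \<Rightarrow> real \<Rightarrow> real \<Rightarrow> (nat \<Rightarrow> nat) \<Rightarrow> real mat" where
  "Cbar n k p \<eta> cl = alphabar n p \<eta> \<cdot>\<^sub>m 1\<^sub>m k - Bbar n k p \<eta> cl"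

end

theory Submission
  imports Defs
begin


lemma exp_bern_bind:
  fixes h :: "real \<Rightarrow> real"
  assumes "0 \<le> q" "q \<le> 1"
  shows "measure_pmf.expectation (bernoulli_pmf q \<bind> (\<lambda>f. return_pmf (g f))) h = q * h (g True) + (1 - q) * h (g False)"
  by (subst pmf_expectation_bind[of UNIV], auto simp: UNIV_bool assms)

lemma exp_bern_bind2:
  fixes h :: "real \<Rightarrow> real"
  assumes "0 \<le> q" "q \<le> 1" "\<And>b. finite (set_pmf (F b))"
  shows "measure_pmf.expectation (bernoulli_pmf q \<bind> F) h = q * measure_pmf.expectation (F True) h + (1 - q) * measure_pmf.expectation (F False) h"
  by (subst pmf_expectation_bind[of UNIV], auto simp: UNIV_bool assms)

lemma entry_exp:
  assumes "0 \<le> p" "p \<le> 1" "0 \<le> \<eta>" "\<eta> \<le> 1"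
  shows "measure_pmf.expectation (entry_pmf p \<eta> cl j l) (\<lambda>x. x) = p * (1 - 2*\<eta>) * (if cl j = cl l then 1 else -1)"
    and "measure_pmf.expectation (entry_pmf p \<eta> cl j l) (\<lambda>x. \<bar>x\<bar>) = p"
  unfolding entry_pmf_def
   apply (cases "cl j = cl l"; subst exp_bern_bind2, simp_all add: assms exp_bern_bind Let_def algebra_simps)
  apply (cases "cl j = cl l"; subst exp_bern_bind2, simp_all add: assms exp_bern_bind Let_def algebra_simps)
  done



lemma csize_pos: assumes "valid_partition n k cl" "i < k" shows "csize n cl i > 0"
proof -
  from assms obtain j where "j < n" "cl j = i" unfolding valid_partition_def by auto
  then have "j \<in> {j. j < n \<and> cl j = i}" by auto
  then show ?thesis unfolding csize_def by (metis card_gt_0_iff empty_iff finite_Collect_conjI finite_Collect_less_nat)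
qed

lemma ThetaT_Theta: assumes "valid_partition n k cl"
  shows "transpose_mat (Theta n k cl) * Theta n k cl = 1\<^sub>m k"
proof (rule eq_matI)
  fix a b assume ab: "a < dim_row (1\<^sub>m k)" "b < dim_col (1\<^sub>m k)"
  have "(transpose_mat (Theta n k cl) * Theta n k cl) $$ (a,b) =
     (\<Sum>j\<in>{0..<n}. (if cl j = a \<and> cl j = b then 1 / real (csize n cl a) else 0))"
    using ab unfolding Theta_def by (auto simp: scalar_prod_def intro!: sum.cong)
  also have "\<dots> = (if a = b then 1 else 0)"
  proof (cases "a = b")
    case True
    have "(\<Sum>j\<in>{0..<n}. (if cl j = a \<and> cl j = b then 1 / real (csize n cl a) else 0))
       = (\<Sum>j\<in>{j\<in>{0..<n}. cl j = a}. 1 / real (csize n cl a))"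
      using True by (subst sum.inter_filter) auto
    also have "\<dots> = 1" using csize_pos[OF assms, of a] ab True assms[unfolded valid_partition_def]
      unfolding csize_def by (simp add: atLeast0LessThan lessThan_def)
    finally show ?thesis using True by simp
  qed (auto intro!: sum.neutral)
  finally show "(transpose_mat (Theta n k cl) * Theta n k cl) $$ (a,b) = 1\<^sub>m k $$ (a,b)"
    using ab by simp
qed (auto simp: Theta_def)


lemma dbar_pos: "n \<ge> 2 \<Longrightarrow> 0 < p \<Longrightarrow> dbar n p > 0"
  unfolding dbar_def by auto

lemma EDbar_eq: assumes "n \<ge> 2" "0 < p" "p \<le> 1" "0 \<le> \<eta>" "\<eta> \<le> 1"
  shows "EDbar n p \<eta> cl = dbar n p \<cdot>\<^sub>m 1\<^sub>m n"
proof (rule eq_matI)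
  fix i j assume ij: "i < dim_row (dbar n p \<cdot>\<^sub>m 1\<^sub>m n)" "j < dim_col (dbar n p \<cdot>\<^sub>m 1\<^sub>m n)"
  have c: "card ({..<n} - {i}) = n - 1" using ij by (simp add: card_Diff_singleton)
  have e: "\<And>j m. measure_pmf.expectation (entry_pmf p \<eta> cl j m) abs = p" using entry_exp(2)[of p \<eta>] assms by auto
  have "real (n - 1) = real n - 1" using assms by auto
  then show "EDbar n p \<eta> cl $$ (i, j) = (dbar n p \<cdot>\<^sub>m 1\<^sub>m n) $$ (i, j)"
    using ij c unfolding EDbar_def dbar_def by (auto simp: e)
qed (auto simp: EDbar_def)

lemma DIS_eq: assumes "n \<ge> 2" "0 < p" "p \<le> 1" "0 \<le> \<eta>" "\<eta> \<le> 1"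
  shows "diag_inv_sqrt (EDbar n p \<eta> cl) = (1 / sqrt (dbar n p)) \<cdot>\<^sub>m 1\<^sub>m n"
  unfolding EDbar_eq[OF assms] diag_inv_sqrt_def by (rule eq_matI) auto

lemma TBT_entry: assumes "B \<in> carrier_mat k k" "j < n" "l < n" "cl j < k" "cl l < k"
  shows "(Theta n k cl * B * transpose_mat (Theta n k cl)) $$ (j,l) =
    B $$ (cl j, cl l) / (sqrt (real (csize n cl (cl j))) * sqrt (real (csize n cl (cl l))))"
proof -
  have "(Theta n k cl * B * transpose_mat (Theta n k cl)) $$ (j,l) =
     (\<Sum>b\<in>{0..<k}. (\<Sum>a\<in>{0..<k}. (if cl j = a then 1 / sqrt (real (csize n cl a)) else 0) * B $$ (a,b))
        * (if cl l = b then 1 / sqrt (real (csize n cl b)) else 0))"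
    using assms by (simp add: scalar_prod_def Theta_def)
  also have "\<dots> = B $$ (cl j, cl l) / (sqrt (real (csize n cl (cl j))) * sqrt (real (csize n cl (cl l))))"
    using assms by (simp add: if_distrib[of "\<lambda>x. x * _"] if_distrib[of "\<lambda>x. _ * x"] if_distrib[of "\<lambda>x. x / _"] sum.delta cong: if_cong)
  finally show ?thesis .
qed

lemma Lsym_eq: assumes "valid_partition n k cl" "n \<ge> 2" "0 < p" "p \<le> 1" "0 \<le> \<eta>" "\<eta> \<le> 1"
  shows "Lsym n p \<eta> cl = alphabar n p \<eta> \<cdot>\<^sub>m 1\<^sub>m n - Theta n k cl * Bbar n k p \<eta> cl * transpose_mat (Theta n k cl)"
proof (rule eq_matI)
  fix j l assume jl: "j < dim_row (alphabar n p \<eta> \<cdot>\<^sub>m 1\<^sub>m n - Theta n k cl * Bbar n k p \<eta> cl * transpose_mat (Theta n k cl))"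
     "l < dim_col (alphabar n p \<eta> \<cdot>\<^sub>m 1\<^sub>m n - Theta n k cl * Bbar n k p \<eta> cl * transpose_mat (Theta n k cl))"
  then have j: "j < n" and l: "l < n" by (auto simp: Theta_def)
  have cj: "cl j < k" and clk: "cl l < k" using assms(1) j l unfolding valid_partition_def by auto
  define s where "s = 1 / sqrt (dbar n p)"
  have d: "dbar n p > 0" using dbar_pos assms by auto
  have ss: "s * s = 1 / dbar n p" unfolding s_def using d by (simp add: real_sqrt_mult[symmetric])
  have L: "Lsym n p \<eta> cl $$ (j,l) = (if j = l then 1 else 0) - s * s * EA n p \<eta> cl $$ (j,l)"
  proof -
    have EA: "EA n p \<eta> cl \<in> carrier_mat n n" by (simp add: EA_def)
    have "Lsym n p \<eta> cl = 1\<^sub>m n - s \<cdot>\<^sub>m (s \<cdot>\<^sub>m EA n p \<eta> cl)"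
    proof -
      have 1: "s \<cdot>\<^sub>m 1\<^sub>m n * EA n p \<eta> cl = s \<cdot>\<^sub>m EA n p \<eta> cl"
        by (subst mult_smult_assoc_mat[of _ n n _ n]) (use EA in auto)
      have 2: "(s \<cdot>\<^sub>m EA n p \<eta> cl) * (s \<cdot>\<^sub>m 1\<^sub>m n) = s \<cdot>\<^sub>m (s \<cdot>\<^sub>m EA n p \<eta> cl)"
        by (subst mult_smult_distrib[of _ n n _ n]) (use EA in auto)
      show ?thesis unfolding Lsym_def DIS_eq[OF assms(2-)] s_def[symmetric] 1 2 ..
    qed
    then show ?thesis using j l EA by simp
  qed
  show "Lsym n p \<eta> cl $$ (j,l) = (alphabar n p \<eta> \<cdot>\<^sub>m 1\<^sub>m n - Theta n k cl * Bbar n k p \<eta> cl * transpose_mat (Theta n k cl)) $$ (j,l)"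
  proof -
    define Nj where "Nj = real (csize n cl (cl j))"
    define Nl where "Nl = real (csize n cl (cl l))"
    have Nj: "Nj > 0" "Nl > 0" using csize_pos[OF assms(1)] cj clk unfolding Nj_def Nl_def by auto
    have B: "Bbar n k p \<eta> cl $$ (cl j, cl l) = (if cl j = cl l then Nj * p / dbar n p * (1 - 2 * \<eta>)
      else - sqrt (Nj * Nl) * p / dbar n p * (1 - 2 * \<eta>))"
      unfolding Bbar_def Nj_def Nl_def using cj clk by auto
    have R: "(alphabar n p \<eta> \<cdot>\<^sub>m 1\<^sub>m n - Theta n k cl * Bbar n k p \<eta> cl * transpose_mat (Theta n k cl)) $$ (j,l)
      = (if j = l then alphabar n p \<eta> else 0) - Bbar n k p \<eta> cl $$ (cl j, cl l) / (sqrt Nj * sqrt Nl)"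
      using j l cj clk TBT_entry[of "Bbar n k p \<eta> cl" k j n l cl] unfolding Nj_def Nl_def
      by (simp add: Bbar_def Theta_def)
    have E: "EA n p \<eta> cl $$ (j,l) = (if j = l then 0 else p * (1 - 2*\<eta>) * (if cl j = cl l then 1 else -1))"
      using j l entry_exp(1)[of p \<eta>] assms unfolding EA_def by auto
    have sq: "sqrt Nj * sqrt Nj = Nj" "sqrt (Nj * Nl) = sqrt Nj * sqrt Nl" using Nj by (auto simp: real_sqrt_mult)
    have sq2: "cl j = cl l \<Longrightarrow> sqrt Nj * sqrt Nl = Nj" using sq unfolding Nj_def Nl_def by simp
    show ?thesis unfolding L R B E ss
      using d Nj sq sq2 by (cases "cl j = cl l"; auto simp: field_simps alphabar_def)
  qed
qed (auto simp: Lsym_def diag_inv_sqrt_def EDbar_def EA_def Theta_def)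


lemma sylvester_det:
  fixes U W :: "real mat"
  assumes U: "U \<in> carrier_mat n m" and W: "W \<in> carrier_mat m n"
  shows "Determinant.det (1\<^sub>m n + U * W) = Determinant.det (1\<^sub>m m + W * U)"
proof -
  let ?M = "four_block_mat (1\<^sub>m n) (-U) W (1\<^sub>m m)"
  have e1: "?M = four_block_mat (1\<^sub>m n) (0\<^sub>m n m) W (1\<^sub>m m) * four_block_mat (1\<^sub>m n) (-U) (0\<^sub>m m n) (1\<^sub>m m + W*U)"
    by (subst mult_four_block_mat[where ?nr1.0=n and ?n1.0=n and ?n2.0=m and ?nr2.0=m and ?nc1.0=n and ?nc2.0=m], insert U W, auto simp: algebra_simps)
  have e2: "?M = four_block_mat (1\<^sub>m n + U*W) (-U) (0\<^sub>m m n) (1\<^sub>m m) * four_block_mat (1\<^sub>m n) (0\<^sub>m n m) W (1\<^sub>m m)"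
    by (subst mult_four_block_mat[where ?nr1.0=n and ?n1.0=n and ?n2.0=m and ?nr2.0=m and ?nc1.0=n and ?nc2.0=m], insert U W, auto simp: algebra_simps)
  have d1: "Determinant.det (four_block_mat (1\<^sub>m n) (0\<^sub>m n m) W (1\<^sub>m m)) = 1"
    by (subst det_four_block_mat_upper_right_zero[where n=n and m=m], insert W, auto)
  have d2: "Determinant.det (four_block_mat (1\<^sub>m n) (-U) (0\<^sub>m m n) (1\<^sub>m m + W*U)) = Determinant.det (1\<^sub>m m + W*U)"
    by (subst det_four_block_mat_lower_left_zero[where n=n and m=m], insert U W, auto)
  have d3: "Determinant.det (four_block_mat (1\<^sub>m n + U*W) (-U) (0\<^sub>m m n) (1\<^sub>m m)) = Determinant.det (1\<^sub>m n + U*W)"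
    by (subst det_four_block_mat_lower_left_zero[where n=n and m=m], insert U W, auto)
  have "Determinant.det ?M = Determinant.det (1\<^sub>m m + W*U)"
    unfolding e1 by (subst det_mult[of _ "n+m"], insert U W, auto simp: d1 d2)
  moreover have "Determinant.det ?M = Determinant.det (1\<^sub>m n + U*W)"
    unfolding e2 by (subst det_mult[of _ "n+m"], insert U W, auto simp: d1 d3)
  ultimately show ?thesis by simp
qed


lemma sym_real_eig_real:
  fixes A :: "real mat"
  assumes A: "A \<in> carrier_mat m m" and S: "transpose_mat A = A"
    and ev: "poly (char_poly (map_mat complex_of_real A)) a = 0"
  shows "a \<in> \<real>"
proof -
  let ?A = "map_mat complex_of_real A"
  have Ac: "?A \<in> carrier_mat m m" using A by auto
  from ev have "eigenvalue ?A a" using eigenvalue_root_char_poly[OF Ac] by simp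
  then obtain v where v: "v \<in> carrier_vec m" "v \<noteq> 0\<^sub>v m" "?A *\<^sub>v v = a \<cdot>\<^sub>v v"
    unfolding eigenvalue_def eigenvector_def using Ac by auto
  have sym: "\<And>i j. i < m \<Longrightarrow> j < m \<Longrightarrow> A $$ (i,j) = A $$ (j,i)"
    using S A by (metis carrier_matD index_transpose_mat(1))
  define S where "S = (\<Sum>i<m. cnj (v $ i) * (\<Sum>j<m. complex_of_real (A $$ (i,j)) * v $ j))"
  define P where "P = (\<Sum>i<m. cnj (v $ i) * v $ i)"
  have "S = (\<Sum>i<m. cnj (v $ i) * (?A *\<^sub>v v) $ i)"
    unfolding S_def using A v(1) by (auto simp: scalar_prod_def atLeast0LessThan intro!: sum.cong)
  also have "\<dots> = a * P" unfolding v(3) P_def using v(1) by (auto simp: sum_distrib_left intro!: sum.cong)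
  finally have SP: "S = a * P" .
  have "cnj S = (\<Sum>i<m. v $ i * (\<Sum>j<m. complex_of_real (A $$ (i,j)) * cnj (v $ j)))"
    unfolding S_def by (simp add: sum_distrib_left)
  also have "\<dots> = (\<Sum>i<m. (\<Sum>j<m. v $ i * complex_of_real (A $$ (i,j)) * cnj (v $ j)))"
    by (simp add: sum_distrib_left mult.assoc)
  also have "\<dots> = (\<Sum>j<m. (\<Sum>i<m. v $ i * complex_of_real (A $$ (i,j)) * cnj (v $ j)))"
    by (rule sum.swap)
  also have "\<dots> = S" unfolding S_def
    by (auto simp: sum_distrib_left sym mult_ac intro!: sum.cong)
  finally have cS: "cnj S = S" .
  have cP: "cnj P = P" unfolding P_def by (simp add: mult.commute)
  have "P \<noteq> 0"
  proof
    assume P0: "P = 0"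
    obtain i where i: "i < m" "v $ i \<noteq> 0" using v(1,2) by (metis carrier_vecD eq_vecI index_zero_vec(1) index_zero_vec(2))
    have "Re P = (\<Sum>i<m. (Re (v $ i))^2 + (Im (v $ i))^2)" unfolding P_def
      by (simp add: Re_sum power2_eq_square)
    also have "\<dots> > 0"
      by (rule sum_pos2[of _ i], use i complex_neq_0 in auto)
    finally show False using P0 by simp
  qed
  have "cnj a * P = a * P" using SP cS cP by (metis complex_cnj_mult)
  then have "cnj a = a" using \<open>P \<noteq> 0\<close> by simp
  then show ?thesis using Reals_cnj_iff by blast
qed



lemma sym_char_poly_split:
  fixes A :: "real mat"
  assumes A: "A \<in> carrier_mat m m" and S: "transpose_mat A = A"
  shows "\<exists>ys. length ys = m \<and> char_poly A = (\<Prod>y\<leftarrow>ys. [:- y, 1:])"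
proof -
  let ?A = "map_mat complex_of_real A"
  have Ac: "?A \<in> carrier_mat m m" using A by auto
  obtain as where as: "char_poly ?A = (\<Prod>a\<leftarrow>as. [:- a, 1:])" "length as = m"
    using char_poly_factorized[OF Ac] by blast
  have real: "\<And>a. a \<in> set as \<Longrightarrow> a \<in> \<real>"
  proof -
    fix a assume "a \<in> set as"
    then have "poly (char_poly ?A) a = 0" unfolding as(1) by (simp add: poly_prod_list_zero_iff)
    then show "a \<in> \<real>" by (rule sym_real_eig_real[OF A S])
  qed
  define ys where "ys = map Re as"
  interpret ofrp: map_poly_comm_semiring_hom "complex_of_real" by unfold_locales
  have "map_poly complex_of_real (\<Prod>y\<leftarrow>ys. [:- y, 1:]) = (\<Prod>y\<leftarrow>ys. map_poly complex_of_real [:- y, 1:])"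
    by (simp add: ofrp.hom_prod_list o_def)
  also have "\<dots> = (\<Prod>a\<leftarrow>as. [:- a, 1:])"
    unfolding ys_def using real by (induction as) (auto simp: map_poly_pCons complex_is_Real_iff)
  also have "\<dots> = map_poly complex_of_real (char_poly A)"
    unfolding as(1)[symmetric] by (rule of_real_hom.char_poly_hom[OF A])
  finally have eq: "map_poly complex_of_real (\<Prod>y\<leftarrow>ys. [:- y, 1:]) = map_poly complex_of_real (char_poly A)" .
  have "char_poly A = (\<Prod>y\<leftarrow>ys. [:- y, 1:])"
  proof (rule poly_eqI)
    fix i show "coeff (char_poly A) i = coeff (\<Prod>y\<leftarrow>ys. [:- y, 1:]) i"
      using arg_cong[OF eq, of "\<lambda>p. coeff p i"] by (simp add: coeff_map_poly)
  qed
  moreover have "length ys = m" using as(2) unfolding ys_def by auto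
  ultimately show ?thesis by blast
qed

lemma char_poly_eval:
  fixes A :: "real mat"
  assumes A: "A \<in> carrier_mat m m"
  shows "poly (char_poly A) x = Determinant.det (x \<cdot>\<^sub>m 1\<^sub>m m - A)"
proof -
  have "- char_matrix A x = x \<cdot>\<^sub>m 1\<^sub>m m - A"
    using A unfolding char_matrix_def by (intro eq_matI) auto
  then show ?thesis using char_poly_matrix[OF A] by simp
qed

lemma n_sum_csize: assumes "valid_partition n k cl"
  shows "(\<Sum>i<k. csize n cl i) = n"
proof -
  have "(\<Sum>i<k. csize n cl i) = (\<Sum>i<k. \<Sum>j\<in>{j\<in>{..<n}. cl j = i}. (1::nat))"
    unfolding csize_def by (auto intro!: sum.cong arg_cong[of _ _ card])
  also have "\<dots> = (\<Sum>j<n. (1::nat))"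
    by (rule sum.group) (use assms in \<open>auto simp: valid_partition_def\<close>)
  finally show ?thesis by simp
qed

lemma n_ge_k: assumes "valid_partition n k cl" shows "k \<le> n"
proof -
  have "(\<Sum>i<k. (1::nat)) \<le> (\<Sum>i<k. csize n cl i)"
    by (rule sum_mono) (use csize_pos[OF assms] in \<open>auto simp: Suc_le_eq\<close>)
  then show ?thesis using n_sum_csize[OF assms] by simp
qed

lemma char_poly_lowrank:
  fixes T B :: "real mat"
  assumes T: "T \<in> carrier_mat n k" and TT: "transpose_mat T * T = 1\<^sub>m k" and B: "B \<in> carrier_mat k k"
    and kn: "k \<le> n"
  shows "char_poly (\<alpha> \<cdot>\<^sub>m 1\<^sub>m n - T * B * transpose_mat T) = [:-\<alpha>, 1:]^(n-k) * char_poly (\<alpha> \<cdot>\<^sub>m 1\<^sub>m k - B)"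
    (is "char_poly ?L = ?R")
proof -
  let ?C = "\<alpha> \<cdot>\<^sub>m 1\<^sub>m k - B"
  let ?M = "T * B * transpose_mat T"
  have M: "?M \<in> carrier_mat n n" using T B by auto
  have L: "?L \<in> carrier_mat n n" using M by (auto intro!: minus_carrier_mat)
  have C: "?C \<in> carrier_mat k k" using B by (auto intro!: minus_carrier_mat)
  have pt: "poly (char_poly ?L) x = poly ?R x" if x: "x \<noteq> \<alpha>" for x
  proof -
    define t where "t = x - \<alpha>"
    have t: "t \<noteq> 0" using x unfolding t_def by auto
    define W where "W = (1/t) \<cdot>\<^sub>m (B * transpose_mat T)"
    have W: "W \<in> carrier_mat k n" unfolding W_def using B T by auto
    have TW: "T * W = (1/t) \<cdot>\<^sub>m ?M" unfolding W_def
      using T B by (subst mult_smult_distrib[of _ n k _ n]) (auto simp: assoc_mult_mat[of _ n k _ k _ n])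
    have WT: "W * T = (1/t) \<cdot>\<^sub>m B" unfolding W_def
      using T B TT by (subst mult_smult_assoc_mat[of _ k n _ k]) (auto simp: assoc_mult_mat[of _ k k _ n _ k])
    have e1: "x \<cdot>\<^sub>m 1\<^sub>m n - ?L = t \<cdot>\<^sub>m (1\<^sub>m n + T * W)"
      unfolding TW using M t by (intro eq_matI) (auto simp: t_def field_simps)
    have e2: "1\<^sub>m k + W * T = (1/t) \<cdot>\<^sub>m (x \<cdot>\<^sub>m 1\<^sub>m k - ?C)"
      unfolding WT using B t by (intro eq_matI) (auto simp: t_def field_simps)
    have "poly (char_poly ?L) x = Determinant.det (t \<cdot>\<^sub>m (1\<^sub>m n + T * W))"
      unfolding char_poly_eval[OF L] e1 ..
    also have "\<dots> = t^n * Determinant.det (1\<^sub>m n + T * W)" using T W by simp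
    also have "\<dots> = t^n * Determinant.det (1\<^sub>m k + W * T)" using sylvester_det[OF T W] by simp
    also have "\<dots> = t^n * ((1/t)^k * poly (char_poly ?C) x)"
      unfolding e2 char_poly_eval[OF C] using B by simp
    also have "\<dots> = t^(n-k) * poly (char_poly ?C) x"
    proof -
      have "t^n = t^(n-k) * t^k" using kn by (simp add: power_add[symmetric])
      then show ?thesis using t by (simp add: power_one_over field_simps)
    qed
    also have "\<dots> = poly ?R x" by (simp add: t_def)
    finally show ?thesis .
  qed
  show ?thesis
  proof (rule ccontr)
    assume ne: "char_poly ?L \<noteq> ?R"
    let ?D = "char_poly ?L - ?R"
    have "?D \<noteq> 0" using ne by simp
    then have fin: "finite {x. poly ?D x = 0}" by (rule poly_roots_finite)
    have "UNIV - {\<alpha>} \<subseteq> {x. poly ?D x = 0}" using pt by auto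
    then have "finite (UNIV - {\<alpha>} :: real set)" using fin finite_subset by blast
    then have "finite (UNIV :: real set)" by simp
    then show False by (simp add: infinite_UNIV_char_0)
  qed
qed




lemma order_lin_prod:
  fixes xs :: "real list"
  shows "order r (\<Prod>x\<leftarrow>xs. [:- x, 1:]) = count (mset xs) r"
proof (induction xs)
  case Nil then show ?case by (simp add: order_1)
next
  case (Cons x xs)
  have nz: "(\<Prod>x\<leftarrow>xs. [:- x, 1:]) \<noteq> 0" by (subst prod_list_zero_iff) auto
  have "order r ([:- x, 1:] * (\<Prod>x\<leftarrow>xs. [:- x, 1:])) = order r [:- x, 1:] + order r (\<Prod>x\<leftarrow>xs. [:- x, 1:])"
    by (rule order_mult) (metis nz mult_eq_0_iff pCons_eq_0_iff one_neq_zero)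
  moreover have "order r [:- x, 1:] = (if r = x then 1 else 0)"
    by (auto simp: order_0I order_power_n_n[of _ 1, simplified])
  ultimately show ?case using Cons by simp
qed

lemma lin_prod_inj:
  fixes xs ys :: "real list"
  assumes "(\<Prod>x\<leftarrow>xs. [:- x, 1:]) = (\<Prod>x\<leftarrow>ys. [:- x, 1:])"
  shows "mset xs = mset ys"
  by (rule multiset_eqI) (metis assms order_lin_prod)

lemma sorted_desc_unique:
  fixes xs ys :: "real list"
  assumes "mset xs = mset ys" "sorted_wrt (\<ge>) xs" "sorted_wrt (\<ge>) ys"
  shows "xs = ys"
proof -
  have "sorted (rev xs)" "sorted (rev ys)" using assms by (auto simp: sorted_wrt_rev)
  moreover have "mset (rev xs) = mset (rev ys)" using assms by simp
  ultimately have "rev xs = rev ys" by (metis properties_for_sort)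
  then show ?thesis by simp
qed

lemma eigs_desc_eq:
  fixes M :: "real mat"
  assumes "length xs = dim_row M" "sorted_wrt (\<ge>) xs" "char_poly M = (\<Prod>x\<leftarrow>xs. [:- x, 1:])"
  shows "eigs_desc M = xs"
  unfolding eigs_desc_def
proof (rule the_equality)
  fix ys assume "length ys = dim_row M \<and> sorted_wrt (\<ge>) ys \<and> char_poly M = (\<Prod>x\<leftarrow>ys. [:- x, 1:])"
  then show "ys = xs" using assms sorted_desc_unique lin_prod_inj by metis
qed (use assms in auto)

lemma det_diag_rank1:
  fixes e w :: "nat \<Rightarrow> real"
  assumes e: "\<And>i. i < k \<Longrightarrow> e i \<noteq> 0"
  shows "Determinant.det (Matrix.mat k k (\<lambda>(i,j). (if i = j then e i else 0) - c * w i * w j))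
      = (\<Prod>i<k. e i) * (1 - c * (\<Sum>i<k. w i ^ 2 / e i))"
proof -
  define E where "E = Matrix.mat k k (\<lambda>(i,j). if i = j then e i else 0)"
  define U where "U = Matrix.mat k 1 (\<lambda>(i,j). - c * w i / e i)"
  define W where "W = Matrix.mat 1 k (\<lambda>(i,j). w j)"
  have E: "E \<in> carrier_mat k k" and U: "U \<in> carrier_mat k 1" and W: "W \<in> carrier_mat 1 k"
    unfolding E_def U_def W_def by auto
  have eq: "Matrix.mat k k (\<lambda>(i,j). (if i = j then e i else 0) - c * w i * w j) = E * (1\<^sub>m k + U * W)"
  proof (rule eq_matI)
    fix i j assume ij: "i < dim_row (E * (1\<^sub>m k + U * W))" "j < dim_col (E * (1\<^sub>m k + U * W))"
    then have i: "i < k" and j: "j < k" using E W by auto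
    have "(E * (1\<^sub>m k + U * W)) $$ (i,j) = (\<Sum>l\<in>{0..<k}. (if i = l then e i else 0) * (1\<^sub>m k + U * W) $$ (l,j))"
      using i j E U W by (simp add: scalar_prod_def E_def)
    also have "\<dots> = e i * (1\<^sub>m k + U * W) $$ (i,j)"
      using i by (simp add: if_distrib[of "\<lambda>x. x * _"] sum.delta cong: if_cong)
    also have "\<dots> = (if i = j then e i else 0) - c * w i * w j"
      using i j U W e[OF i] by (simp add: scalar_prod_def U_def W_def field_simps)
    finally show "Matrix.mat k k (\<lambda>(i,j). (if i = j then e i else 0) - c * w i * w j) $$ (i,j) = (E * (1\<^sub>m k + U * W)) $$ (i,j)"
      using i j by simp
  qed (use E W in auto)
  have dE: "Determinant.det E = (\<Prod>i<k. e i)"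
  proof -
    have "Determinant.det E = prod_list (diag_mat E)"
      by (rule det_upper_triangular[of _ k]) (auto simp: E_def upper_triangular_def)
    also have "diag_mat E = map e [0..<k]" unfolding diag_mat_def E_def by auto
    also have "prod_list (map e [0..<k]) = prod e (set [0..<k])"
      by (rule prod.distinct_set_conv_list[symmetric]) simp
    finally show ?thesis by (simp add: atLeast0LessThan)
  qed
  have d1: "Determinant.det (1\<^sub>m 1 + W * U) = 1 - c * (\<Sum>i<k. w i ^ 2 / e i)"
  proof -
    have "Determinant.det (1\<^sub>m 1 + W * U) = (1\<^sub>m 1 + W * U) $$ (0,0)"
      by (subst det_upper_triangular[of _ 1]) (use W U in \<open>auto simp: upper_triangular_def diag_mat_def\<close>)
    also have "\<dots> = 1 - c * (\<Sum>i<k. w i ^ 2 / e i)"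
      using W U by (simp add: scalar_prod_def U_def W_def sum_distrib_left power2_eq_square atLeast0LessThan sum_negf field_simps)
    finally show ?thesis .
  qed
  have "Determinant.det (E * (1\<^sub>m k + U * W)) = Determinant.det E * Determinant.det (1\<^sub>m k + U * W)"
    by (rule det_mult[of _ k]) (use E U W in auto)
  also have "Determinant.det (1\<^sub>m k + U * W) = Determinant.det (1\<^sub>m 1 + W * U)" by (rule sylvester_det[OF U W])
  finally show ?thesis unfolding eq dE d1 .
qed

lemma poly_lin_prod: "poly (\<Prod>y\<leftarrow>ys. [:- y, 1:]) x = (\<Prod>y\<leftarrow>ys. x - (y::real))"
  by (induction ys) (auto simp: algebra_simps)

lemma prod_list_pos_real: "(\<And>y. y \<in> set ys \<Longrightarrow> (0::real) < f y) \<Longrightarrow> 0 < (\<Prod>y\<leftarrow>ys. f y)"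
  by (induction ys) auto

lemma two_split: "length xs \<ge> 2 \<Longrightarrow> xs = xs!0 # xs!1 # drop 2 xs"
  by (cases xs; cases "tl xs") auto

lemma roots_analysis:
  fixes f :: "real poly" and ys :: "real list" and N :: "nat \<Rightarrow> real"
  assumes k2: "k \<ge> 2" and Nm: "\<And>i. i < k \<Longrightarrow> m \<le> N i" and m: "m > 0" and c: "c > 0"
    and f: "f = (\<Prod>y\<leftarrow>ys. [:- y, 1:])" and len: "length ys = k" and srt: "sorted_wrt (\<ge>) ys"
    and fx: "\<And>x. x > \<alpha> - 2*c*m \<Longrightarrow> poly f x = (\<Prod>i<k. x - \<alpha> + 2*c*N i) * (1 - c * (\<Sum>i<k. N i / (x - \<alpha> + 2*c*N i)))"
  shows "ys ! 0 \<ge> \<alpha>" "ys ! 1 \<le> \<alpha> - 2*c*m"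
proof -
  define a where "a = \<alpha> - 2*c*m"
  define g where "g x = 1 - c * (\<Sum>i<k. N i / (x - \<alpha> + 2*c*N i))" for x
  have Npos: "\<And>i. i < k \<Longrightarrow> N i > 0" using Nm m by (meson less_le_trans)
  have epos: "x - \<alpha> + 2*c*N i > 0" if "x > a" "i < k" for x i
  proof -
    have "c * m \<le> c * N i" using Nm[OF that(2)] c by (simp add: mult_left_mono)
    then show ?thesis using that(1) unfolding a_def by linarith
  qed
  have Ppos: "(\<Prod>i<k. x - \<alpha> + 2*c*N i) > 0" if "x > a" for x
    by (rule prod_pos) (use epos that in auto)
  have fx': "poly f x = (\<Prod>i<k. x - \<alpha> + 2*c*N i) * g x" if "x > a" for x
    using fx that unfolding a_def g_def by auto
  have groot: "g r = 0" if "r \<in> set ys" "r > a" for r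
  proof -
    have "poly f r = 0" unfolding f poly_lin_prod using that(1)
      by (induction ys) auto
    then have "(\<Prod>i<k. r - \<alpha> + 2*c*N i) * g r = 0" using fx'[OF that(2)] by simp
    then show ?thesis using Ppos[OF that(2)] by (simp only: mult_eq_0_iff) linarith
  qed
  have gmono: "g x < g y" if "a < x" "x < y" for x y
  proof -
    have "(\<Sum>i<k. N i / (y - \<alpha> + 2*c*N i)) < (\<Sum>i<k. N i / (x - \<alpha> + 2*c*N i))"
    proof (rule sum_strict_mono)
      fix i assume i: "i \<in> {..<k}"
      have "x - \<alpha> + 2*c*N i > 0" using epos that i by auto
      then show "N i / (y - \<alpha> + 2*c*N i) < N i / (x - \<alpha> + 2*c*N i)"
        using Npos i that by (intro divide_strict_left_mono) auto
    qed (use k2 in \<open>auto simp: lessThan_empty_iff\<close>)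
    then show ?thesis unfolding g_def using c by simp
  qed
  have aa: "a < \<alpha>" unfolding a_def using c m by simp
  have nth_le: "ys ! j \<le> ys ! i" if "i \<le> j" "j < k" for i j
  proof (cases "i = j")
    case False
    then have "i < j" using that by simp
    then show ?thesis using sorted_wrt_nth_less[OF srt, of i j] that len by simp
  qed simp
  show A: "ys ! 0 \<ge> \<alpha>"
  proof (rule ccontr)
    assume "\<not> ys ! 0 \<ge> \<alpha>"
    then have "\<forall>y\<in>set ys. y < \<alpha>"
    proof (intro ballI)
      fix y assume "y \<in> set ys" and lt: "\<not> ys ! 0 \<ge> \<alpha>"
      then obtain j where j: "j < length ys" "y = ys ! j" by (auto simp: in_set_conv_nth)
      then have "y \<le> ys ! 0" using nth_le[of 0 j] len by simp
      then show "y < \<alpha>" using lt by simp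
    qed
    then have "poly f \<alpha> > 0" unfolding f poly_lin_prod by (intro prod_list_pos_real) auto
    moreover have "poly f \<alpha> \<le> 0"
    proof -
      have "(\<Sum>i<k. N i / (\<alpha> - \<alpha> + 2*c*N i)) = (\<Sum>i<k. 1 / (2 * c))"
        by (rule sum.cong) (use Npos c in \<open>auto simp: less_imp_neq[symmetric]\<close>)
      then have "g \<alpha> = 1 - real k / 2" unfolding g_def using c by simp
      then have "g \<alpha> \<le> 0" using k2 by simp
      then show ?thesis using fx'[OF aa] Ppos[OF aa] by (simp add: mult_nonneg_nonpos)
    qed
    ultimately show False by simp
  qed
  show "ys ! 1 \<le> \<alpha> - 2*c*m"
  proof (rule ccontr)
    assume "\<not> ys ! 1 \<le> \<alpha> - 2*c*m"
    then have r1: "ys ! 1 > a" unfolding a_def by simp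
    have r01: "ys ! 1 \<le> ys ! 0" using nth_le k2 by auto
    have in01: "ys ! 0 \<in> set ys" "ys ! 1 \<in> set ys" using len k2 by auto
    have r0: "ys ! 0 > a" using r1 r01 by simp
    have g0: "g (ys ! 0) = 0" "g (ys ! 1) = 0" using groot in01 r0 r1 by auto
    have eq: "ys ! 0 = ys ! 1"
    proof (rule ccontr)
      assume "ys ! 0 \<noteq> ys ! 1"
      then have "ys ! 1 < ys ! 0" using r01 by simp
      then show False using gmono[OF r1, of "ys ! 0"] g0 by simp
    qed
    define r where "r = ys ! 0"
    have ysr: "ys = r # r # drop 2 ys" unfolding r_def using eq two_split[of ys] len k2 by simp
    define q where "q = (\<Prod>y\<leftarrow>drop 2 ys. [:- y, 1:])"
    have fq: "f = [:- r, 1:] * ([:- r, 1:] * q)" unfolding f q_def by (subst ysr) simp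
    have pd0: "poly (pderiv f) r = 0" unfolding fq pderiv_mult poly_add poly_mult by simp
    define Q where "Q = (\<Prod>i<k. [:2*c*N i - \<alpha>, 1:])"
    have PQ: "poly Q x = (\<Prod>i<k. x - \<alpha> + 2*c*N i)" for x
      unfolding Q_def poly_prod by (auto intro!: prod.cong)
    define g' where "g' = c * (\<Sum>i<k. N i / (r - \<alpha> + 2*c*N i)^2)"
    have ra: "r > a" using r0 r_def by simp
    have dg: "DERIV g r :> g'"
    proof -
      have "DERIV (\<lambda>x. N i / (x - \<alpha> + 2*c*N i)) r :> - (N i / (r - \<alpha> + 2*c*N i)^2)" if i: "i \<in> {..<k}" for i
      proof -
        have ne: "r - \<alpha> + 2*c*N i \<noteq> 0" using epos[OF ra] i by (metis lessThan_iff less_irrefl)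
        have d1: "DERIV (\<lambda>x. x - \<alpha> + 2*c*N i) r :> 1"
          by (auto intro!: derivative_eq_intros)
        have "DERIV (\<lambda>x. N i / (x - \<alpha> + 2*c*N i)) r :> (0 * (r - \<alpha> + 2*c*N i) - N i * 1) / ((r - \<alpha> + 2*c*N i) * (r - \<alpha> + 2*c*N i))"
          by (rule DERIV_divide[OF DERIV_const d1 ne])
        then show ?thesis by (simp add: power2_eq_square)
      qed
      then have "DERIV (\<lambda>x. \<Sum>i<k. N i / (x - \<alpha> + 2*c*N i)) r :> (\<Sum>i<k. - (N i / (r - \<alpha> + 2*c*N i)^2))"
        by (rule DERIV_sum)
      then have "DERIV (\<lambda>x. 1 - c * (\<Sum>i<k. N i / (x - \<alpha> + 2*c*N i))) r :> 0 - c * (\<Sum>i<k. - (N i / (r - \<alpha> + 2*c*N i)^2))"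
        by (intro DERIV_diff DERIV_cmult) auto
      then show ?thesis unfolding g_def[abs_def] g'_def by (simp add: sum_negf)
    qed
    have "DERIV (\<lambda>x. poly Q x * g x) r :> poly (pderiv Q) r * g r + poly Q r * g'"
      using DERIV_mult[OF poly_DERIV dg] by (simp add: mult.commute)
    then have "DERIV (poly f) r :> poly (pderiv Q) r * g r + poly Q r * g'"
      by (rule has_field_derivative_transform_within_open[of _ _ _ "{a<..}"]) (use ra fx' PQ in auto)
    then have "poly (pderiv f) r = poly (pderiv Q) r * g r + poly Q r * g'"
      using poly_DERIV DERIV_unique by blast
    also have "\<dots> = poly Q r * g'" using g0 r_def by simp
    also have "\<dots> > 0"
    proof -
      have "g' > 0" unfolding g'_def using c
      proof (intro mult_pos_pos sum_pos)
        fix i assume "i \<in> {..<k}"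
        then have "N i > 0" "r - \<alpha> + 2*c*N i > 0" using Npos epos[OF ra] by auto
        then show "N i / (r - \<alpha> + 2*c*N i)^2 > 0" by simp
      qed (use k2 c in \<open>auto simp: lessThan_empty_iff\<close>)
      then show ?thesis using Ppos[OF ra] PQ by simp
    qed
    finally show False using pd0 by simp
  qed
qed




lemma smult_one_mult_vec: fixes v :: "real Matrix.vec"
  assumes "v \<in> carrier_vec n" shows "(a \<cdot>\<^sub>m 1\<^sub>m n) *\<^sub>v v = a \<cdot>\<^sub>v v"
  by (rule eq_vecI) (use assms in \<open>auto simp: scalar_prod_def if_distrib[of "\<lambda>x. x * _"] if_distrib[of "\<lambda>x. _ * x"] sum.delta cong: if_cong\<close>)

context
  fixes T B :: "real mat" and n k :: nat and \<alpha> :: real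
  assumes T: "T \<in> carrier_mat n k" and TT: "transpose_mat T * T = 1\<^sub>m k" and B: "B \<in> carrier_mat k k"
begin

lemma LT_vec: assumes r: "r \<in> carrier_vec k"
  shows "(\<alpha> \<cdot>\<^sub>m 1\<^sub>m n - T * B * transpose_mat T) *\<^sub>v (T *\<^sub>v r) = T *\<^sub>v ((\<alpha> \<cdot>\<^sub>m 1\<^sub>m k - B) *\<^sub>v r)"
proof -
  have Tr: "T *\<^sub>v r \<in> carrier_vec n" using T r by auto
  have M: "T * B * transpose_mat T \<in> carrier_mat n n" using T B by auto
  have "(\<alpha> \<cdot>\<^sub>m 1\<^sub>m n - T * B * transpose_mat T) *\<^sub>v (T *\<^sub>v r) = \<alpha> \<cdot>\<^sub>v (T *\<^sub>v r) - (T * B * transpose_mat T) *\<^sub>v (T *\<^sub>v r)"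
    using M Tr by (subst minus_mult_distrib_mat_vec[of _ n n]) (auto simp: smult_one_mult_vec)
  also have "(T * B * transpose_mat T) *\<^sub>v (T *\<^sub>v r) = T *\<^sub>v (B *\<^sub>v r)"
  proof -
    have "(T * B * transpose_mat T) *\<^sub>v (T *\<^sub>v r) = (T * B) *\<^sub>v (transpose_mat T *\<^sub>v (T *\<^sub>v r))"
      using T B r by (subst assoc_mult_mat_vec[of _ n k]) auto
    also have "transpose_mat T *\<^sub>v (T *\<^sub>v r) = r"
      using T r TT by (subst assoc_mult_mat_vec[of _ k n, symmetric]) auto
    finally show ?thesis using T B r by (simp add: assoc_mult_mat_vec[of _ n k])
  qed
  also have "\<alpha> \<cdot>\<^sub>v (T *\<^sub>v r) - T *\<^sub>v (B *\<^sub>v r) = T *\<^sub>v ((\<alpha> \<cdot>\<^sub>m 1\<^sub>m k - B) *\<^sub>v r)"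
  proof -
    have "(\<alpha> \<cdot>\<^sub>m 1\<^sub>m k - B) *\<^sub>v r = \<alpha> \<cdot>\<^sub>v r - B *\<^sub>v r"
      using B r by (subst minus_mult_distrib_mat_vec[of _ k k]) (auto simp: smult_one_mult_vec)
    moreover have "T *\<^sub>v (\<alpha> \<cdot>\<^sub>v r - B *\<^sub>v r) = T *\<^sub>v (\<alpha> \<cdot>\<^sub>v r) - T *\<^sub>v (B *\<^sub>v r)"
      using T B r by (subst mult_minus_distrib_mat_vec[of _ n k]) auto
    moreover have "T *\<^sub>v (\<alpha> \<cdot>\<^sub>v r) = \<alpha> \<cdot>\<^sub>v (T *\<^sub>v r)" using T r by (rule mult_mat_vec)
    ultimately show ?thesis by simp
  qed
  finally show ?thesis .
qed

lemma TTv: assumes r: "r \<in> carrier_vec k" shows "transpose_mat T *\<^sub>v (T *\<^sub>v r) = r"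
  using T r TT by (subst assoc_mult_mat_vec[of _ k n, symmetric]) auto

lemma Mv: assumes v: "v \<in> carrier_vec n"
  shows "(T * B * transpose_mat T) *\<^sub>v v = T *\<^sub>v (B *\<^sub>v (transpose_mat T *\<^sub>v v))"
proof -
  have "(T * B * transpose_mat T) *\<^sub>v v = (T * B) *\<^sub>v (transpose_mat T *\<^sub>v v)"
    by (rule assoc_mult_mat_vec[of _ n k]) (use T B v in auto)
  also have "\<dots> = T *\<^sub>v (B *\<^sub>v (transpose_mat T *\<^sub>v v))"
    by (rule assoc_mult_mat_vec[of _ n k]) (use T B v in auto)
  finally show ?thesis .
qed

lemma Lv: assumes v: "v \<in> carrier_vec n"
  shows "(\<alpha> \<cdot>\<^sub>m 1\<^sub>m n - T * B * transpose_mat T) *\<^sub>v v = \<alpha> \<cdot>\<^sub>v v - T *\<^sub>v (B *\<^sub>v (transpose_mat T *\<^sub>v v))"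
proof -
  have M: "T * B * transpose_mat T \<in> carrier_mat n n" using T B by auto
  show ?thesis using M v by (subst minus_mult_distrib_mat_vec[of _ n n]) (auto simp: smult_one_mult_vec Mv)
qed

lemma TL_vec: assumes v: "v \<in> carrier_vec n"
  shows "transpose_mat T *\<^sub>v ((\<alpha> \<cdot>\<^sub>m 1\<^sub>m n - T * B * transpose_mat T) *\<^sub>v v) = (\<alpha> \<cdot>\<^sub>m 1\<^sub>m k - B) *\<^sub>v (transpose_mat T *\<^sub>v v)"
proof -
  have u: "transpose_mat T *\<^sub>v v \<in> carrier_vec k" using T v by auto
  have "transpose_mat T *\<^sub>v (\<alpha> \<cdot>\<^sub>v v - T *\<^sub>v (B *\<^sub>v (transpose_mat T *\<^sub>v v)))
     = transpose_mat T *\<^sub>v (\<alpha> \<cdot>\<^sub>v v) - transpose_mat T *\<^sub>v (T *\<^sub>v (B *\<^sub>v (transpose_mat T *\<^sub>v v)))"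
    using T B v by (subst mult_minus_distrib_mat_vec[of _ k n]) auto
  also have "\<dots> = \<alpha> \<cdot>\<^sub>v (transpose_mat T *\<^sub>v v) - B *\<^sub>v (transpose_mat T *\<^sub>v v)"
    using T B u v by (simp add: TTv mult_mat_vec[of _ k n])
  also have "\<dots> = (\<alpha> \<cdot>\<^sub>m 1\<^sub>m k - B) *\<^sub>v (transpose_mat T *\<^sub>v v)"
    using B u by (subst minus_mult_distrib_mat_vec[of _ k k]) (auto simp: smult_one_mult_vec)
  finally show ?thesis using Lv[OF v] by simp
qed

lemma proj_fix: assumes v: "v \<in> carrier_vec n"
  and ev: "(\<alpha> \<cdot>\<^sub>m 1\<^sub>m n - T * B * transpose_mat T) *\<^sub>v v = lam \<cdot>\<^sub>v v" and ne: "lam \<noteq> \<alpha>"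
  shows "T *\<^sub>v (transpose_mat T *\<^sub>v v) = v"
proof -
  define w where "w = B *\<^sub>v (transpose_mat T *\<^sub>v v)"
  have w: "w \<in> carrier_vec k" unfolding w_def using B T v by auto
  have e: "\<alpha> \<cdot>\<^sub>v v - T *\<^sub>v w = lam \<cdot>\<^sub>v v" using ev Lv[OF v] unfolding w_def by simp
  define y where "y = (1 / (\<alpha> - lam)) \<cdot>\<^sub>v w"
  have y: "y \<in> carrier_vec k" unfolding y_def using w by auto
  have vy: "v = T *\<^sub>v y"
  proof (rule eq_vecI)
    fix i assume i: "i < dim_vec (T *\<^sub>v y)"
    then have i': "i < n" using T by auto
    have "(\<alpha> \<cdot>\<^sub>v v - T *\<^sub>v w) $ i = (lam \<cdot>\<^sub>v v) $ i" using e by simp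
    then have "\<alpha> * v $ i - (T *\<^sub>v w) $ i = lam * v $ i" using i' v T w by simp
    then have "(T *\<^sub>v w) $ i = (\<alpha> - lam) * v $ i" by (simp add: algebra_simps)
    moreover have "T *\<^sub>v y = (1 / (\<alpha> - lam)) \<cdot>\<^sub>v (T *\<^sub>v w)" unfolding y_def using T w by (rule mult_mat_vec)
    ultimately show "v $ i = (T *\<^sub>v y) $ i" using i' T ne by simp
  qed (use v T in auto)
  show ?thesis unfolding vy using TTv[OF y] by simp
qed

lemma bottom_transfer:
  assumes evals: "\<And>j. j < m \<Longrightarrow> eig (\<alpha> \<cdot>\<^sub>m 1\<^sub>m n - T * B * transpose_mat T) (n - j) = eig (\<alpha> \<cdot>\<^sub>m 1\<^sub>m k - B) (k - j)"
    and ne: "\<And>j. j < m \<Longrightarrow> eig (\<alpha> \<cdot>\<^sub>m 1\<^sub>m n - T * B * transpose_mat T) (n - j) \<noteq> \<alpha>"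
  shows "is_bottom_eigvecs (\<alpha> \<cdot>\<^sub>m 1\<^sub>m n - T * B * transpose_mat T) m V \<longleftrightarrow>
     (\<exists>R. is_bottom_eigvecs (\<alpha> \<cdot>\<^sub>m 1\<^sub>m k - B) m R \<and> V = T * R)"
    (is "is_bottom_eigvecs ?L m V \<longleftrightarrow> (\<exists>R. is_bottom_eigvecs ?C m R \<and> _)")
proof
  assume bv: "is_bottom_eigvecs ?L m V"
  have dL: "dim_row ?L = n" and dC: "dim_row ?C = k" using T B by auto
  from bv have V: "V \<in> carrier_mat n m" and VV: "transpose_mat V * V = 1\<^sub>m m"
    and evV: "\<And>j. j < m \<Longrightarrow> ?L *\<^sub>v col V j = eig ?L (n - j) \<cdot>\<^sub>v col V j"
    unfolding is_bottom_eigvecs_def dL by auto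
  define R where "R = transpose_mat T * V"
  have R: "R \<in> carrier_mat k m" unfolding R_def using T V by auto
  have colR: "col R j = transpose_mat T *\<^sub>v col V j" if "j < m" for j
    unfolding R_def by (rule col_mult2[of _ k n _ m]) (use that V T in auto)
  have VTR: "V = T * R"
  proof (rule mat_col_eqI)
    fix j assume "j < dim_col (T * R)"
    then have j: "j < m" using R by auto
    have cv: "col V j \<in> carrier_vec n" using V j by auto
    have "col (T * R) j = T *\<^sub>v col R j" by (rule col_mult2[of _ n k _ m]) (use T R j in auto)
    also have "\<dots> = T *\<^sub>v (transpose_mat T *\<^sub>v col V j)" by (simp only: colR[OF j])
    also have "\<dots> = col V j" by (rule proj_fix[OF cv evV[OF j] ne[OF j]])
    finally show "col V j = col (T * R) j" by simp
  qed (use V R T in auto)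
  have RR: "transpose_mat R * R = 1\<^sub>m m"
  proof -
    have "transpose_mat R * R = (transpose_mat V * T) * (transpose_mat T * V)"
      unfolding R_def using T V by (simp add: transpose_mult[of _ k n])
    also have "\<dots> = transpose_mat V * (T * (transpose_mat T * V))"
      by (rule assoc_mult_mat[of _ m n _ k _ m]) (use T V in auto)
    also have "\<dots> = transpose_mat V * V" using VTR R_def by simp
    finally show ?thesis using VV by simp
  qed
  have evR: "?C *\<^sub>v col R j = eig ?C (k - j) \<cdot>\<^sub>v col R j" if j: "j < m" for j
  proof -
    have cv: "col V j \<in> carrier_vec n" using V j by auto
    have "?C *\<^sub>v col R j = transpose_mat T *\<^sub>v (?L *\<^sub>v col V j)" using TL_vec[OF cv] colR[OF j] by simp
    also have "\<dots> = transpose_mat T *\<^sub>v (eig ?L (n - j) \<cdot>\<^sub>v col V j)" using evV[OF j] by simp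
    also have "\<dots> = eig ?L (n - j) \<cdot>\<^sub>v (transpose_mat T *\<^sub>v col V j)"
      by (rule mult_mat_vec[of _ k n]) (use T cv in auto)
    finally show ?thesis using evals[OF j] colR[OF j] by simp
  qed
  have "is_bottom_eigvecs ?C m R" unfolding is_bottom_eigvecs_def dC using R RR evR by auto
  then show "\<exists>R. is_bottom_eigvecs ?C m R \<and> V = T * R" using VTR by blast
next
  assume "\<exists>R. is_bottom_eigvecs ?C m R \<and> V = T * R"
  then obtain R where bR: "is_bottom_eigvecs ?C m R" and VTR: "V = T * R" by blast
  have dL: "dim_row ?L = n" and dC: "dim_row ?C = k" using T B by auto
  from bR have R: "R \<in> carrier_mat k m" and RR: "transpose_mat R * R = 1\<^sub>m m"
    and evR: "\<And>j. j < m \<Longrightarrow> ?C *\<^sub>v col R j = eig ?C (k - j) \<cdot>\<^sub>v col R j"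
    unfolding is_bottom_eigvecs_def dC by auto
  have V: "V \<in> carrier_mat n m" using VTR T R by auto
  have VV: "transpose_mat V * V = 1\<^sub>m m"
  proof -
    have "transpose_mat V * V = (transpose_mat R * transpose_mat T) * (T * R)"
      unfolding VTR using T R by (simp add: transpose_mult[of _ n k])
    also have "\<dots> = transpose_mat R * (transpose_mat T * (T * R))"
      by (rule assoc_mult_mat[of _ m k _ n _ m]) (use T R in auto)
    also have "transpose_mat T * (T * R) = (transpose_mat T * T) * R"
      by (rule assoc_mult_mat[symmetric, of _ k n _ k _ m]) (use T R in auto)
    finally show ?thesis using TT RR R by simp
  qed
  have evV: "?L *\<^sub>v col V j = eig ?L (n - j) \<cdot>\<^sub>v col V j" if j: "j < m" for j
  proof -
    have cr: "col R j \<in> carrier_vec k" using R j by auto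
    have cV: "col V j = T *\<^sub>v col R j" unfolding VTR by (rule col_mult2[of _ n k _ m]) (use T R j in auto)
    have "?L *\<^sub>v col V j = T *\<^sub>v (?C *\<^sub>v col R j)" unfolding cV by (rule LT_vec[OF cr])
    also have "\<dots> = T *\<^sub>v (eig ?C (k - j) \<cdot>\<^sub>v col R j)" using evR[OF j] by simp
    also have "\<dots> = eig ?C (k - j) \<cdot>\<^sub>v (T *\<^sub>v col R j)" by (rule mult_mat_vec[OF T cr])
    finally show ?thesis using evals[OF j] cV by simp
  qed
  show "is_bottom_eigvecs ?L m V" unfolding is_bottom_eigvecs_def dL using V VV evV by auto
qed

end





lemma Cbar_carrier: "Cbar n k p \<eta> cl \<in> carrier_mat k k"
  unfolding Cbar_def Bbar_def by (auto intro!: minus_carrier_mat)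

lemma Bbar_carrier: "Bbar n k p \<eta> cl \<in> carrier_mat k k"
  unfolding Bbar_def by auto

lemma Cbar_sym: "transpose_mat (Cbar n k p \<eta> cl) = Cbar n k p \<eta> cl"
  unfolding Cbar_def Bbar_def by (rule eq_matI) (auto simp: mult.commute)

lemma Cbar_poly:
  assumes vp: "valid_partition n k cl" and c_def: "c = p / dbar n p * (1 - 2*\<eta>)"
    and ne: "\<And>i. i < k \<Longrightarrow> x - alphabar n p \<eta> + 2 * c * real (csize n cl i) \<noteq> 0"
  shows "poly (char_poly (Cbar n k p \<eta> cl)) x = (\<Prod>i<k. x - alphabar n p \<eta> + 2*c*real (csize n cl i)) *
     (1 - c * (\<Sum>i<k. real (csize n cl i) / (x - alphabar n p \<eta> + 2*c*real (csize n cl i))))"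
proof -
  define N where "N i = real (csize n cl i)" for i
  define e where "e i = x - alphabar n p \<eta> + 2*c*N i" for i
  define w where "w i = sqrt (N i)" for i
  have Npos: "N i > 0" if "i < k" for i using csize_pos[OF vp that] unfolding N_def by simp
  have eq: "x \<cdot>\<^sub>m 1\<^sub>m k - Cbar n k p \<eta> cl = Matrix.mat k k (\<lambda>(i,j). (if i = j then e i else 0) - c * w i * w j)"
  proof (rule eq_matI)
    fix i j assume ij: "i < dim_row (Matrix.mat k k (\<lambda>(i,j). (if i = j then e i else 0) - c * w i * w j))"
      "j < dim_col (Matrix.mat k k (\<lambda>(i,j). (if i = j then e i else 0) - c * w i * w j))"
    then have i: "i < k" and j: "j < k" by auto
    have ww: "w i * w i = N i" "w i * w j = sqrt (N i * N j)" unfolding w_def using Npos[OF i] Npos[OF j]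
      by (auto simp: real_sqrt_mult)
    show "(x \<cdot>\<^sub>m 1\<^sub>m k - Cbar n k p \<eta> cl) $$ (i, j) = Matrix.mat k k (\<lambda>(i,j). (if i = j then e i else 0) - c * w i * w j) $$ (i, j)"
    proof -
      have hB: "Bbar n k p \<eta> cl $$ (i,j) = (if i = j then c * N i else - c * sqrt (N i * N j))"
        using i j unfolding Bbar_def c_def N_def by auto
      have w2: "c * w i * w j = (if i = j then c * N i else c * sqrt (N i * N j))"
        using ww by (auto simp: mult.assoc)
      have dB: "dim_row (Bbar n k p \<eta> cl) = k" "dim_col (Bbar n k p \<eta> cl) = k" by (auto simp: Bbar_def)
      show ?thesis using i j unfolding Cbar_def using hB w2 dB by (auto simp: e_def)
    qed
  qed (auto simp: Cbar_def Bbar_def)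
  have "poly (char_poly (Cbar n k p \<eta> cl)) x = Determinant.det (Matrix.mat k k (\<lambda>(i,j). (if i = j then e i else 0) - c * w i * w j))"
    unfolding char_poly_eval[OF Cbar_carrier] eq ..
  also have "\<dots> = (\<Prod>i<k. e i) * (1 - c * (\<Sum>i<k. w i ^ 2 / e i))"
    by (rule det_diag_rank1) (use ne in \<open>auto simp: e_def N_def\<close>)
  also have "(\<Sum>i<k. w i ^ 2 / e i) = (\<Sum>i<k. N i / e i)"
    by (rule sum.cong) (use Npos in \<open>auto simp: w_def less_imp_le\<close>)
  finally show ?thesis unfolding e_def N_def .
qed


lemma nth_zs: "i \<ge> 1 + m \<Longrightarrow> (a # replicate m b @ xs) ! i = xs ! (i - 1 - m)"
  by (cases i) (auto simp: nth_append)

lemma mset_prod_eq: "mset xs = mset ys \<Longrightarrow> (\<Prod>x\<leftarrow>xs. f x) = (\<Prod>x\<leftarrow>ys. (f x :: real poly))"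
  by (metis mset_map prod_mset_prod_list)

theorem mainTheorem17:
  fixes n k :: nat and p \<eta> :: real and cl :: "nat \<Rightarrow> nat"
  assumes "n \<ge> 2" and "k \<ge> 2"
    and "0 < p" and "p \<le> 1" and "0 \<le> \<eta>" and "\<eta> < 1/2"
    and "valid_partition n k cl"
    and "sqrt (aspect_ratio n k cl) > 1 - 1 / (4 * real k * (2 + sqrt (real k)))"
  shows "(\<forall>V. is_bottom_eigvecs (Lsym n p \<eta> cl) (k - 1) V \<longleftrightarrow>
            (\<exists>R. is_bottom_eigvecs (Cbar n k p \<eta> cl) (k - 1) R \<and> V = Theta n k cl * R))
     \<and> eig (Lsym n p \<eta> cl) (n - k + 1) - eig (Lsym n p \<eta> cl) (n - k + 2) \<ge> (1 - 2 * \<eta>) / real k"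
proof -
  note vp = assms(7)
  have n2: "n \<ge> 2" and k2: "k \<ge> 2" and p0: "0 < p" and p1: "p \<le> 1" and e0: "0 \<le> \<eta>" and e1: "\<eta> < 1/2"
    using assms by auto
  define \<alpha> where "\<alpha> = alphabar n p \<eta>"
  define c where "c = p / dbar n p * (1 - 2*\<eta>)"
  define N where "N i = real (csize n cl i)" for i
  define mn where "mn = real (Min (csize n cl ` {..<k}))"
  define mx where "mx = real (Max (csize n cl ` {..<k}))"
  have kn: "k \<le> n" by (rule n_ge_k[OF vp])
  have d: "dbar n p = p * (real n - 1)" "dbar n p > 0" using dbar_pos[OF n2 p0] by (auto simp: dbar_def)
  have c_eq: "c = (1 - 2*\<eta>) / (real n - 1)" unfolding c_def d(1) using p0 by simp
  have c_pos: "c > 0" unfolding c_eq using n2 e1 by simp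
  have \<alpha>_eq: "\<alpha> = 1 + c" unfolding \<alpha>_def alphabar_def c_def by simp
  have fin: "finite (csize n cl ` {..<k})" and ne: "csize n cl ` {..<k} \<noteq> {}" using k2 by (auto simp: lessThan_empty_iff)
  have mn_le: "mn \<le> N i" if "i < k" for i unfolding mn_def N_def using fin that by simp
  have mx_ge: "N i \<le> mx" if "i < k" for i unfolding mx_def N_def using fin that by simp
  have mn_pos: "mn > 0"
  proof -
    have "Min (csize n cl ` {..<k}) \<in> csize n cl ` {..<k}" using Min_in[OF fin ne] .
    then obtain i where "i < k" "Min (csize n cl ` {..<k}) = csize n cl i" by auto
    then show ?thesis unfolding mn_def using csize_pos[OF vp] by simp
  qed
  let ?T = "Theta n k cl" and ?B = "Bbar n k p \<eta> cl" and ?L = "Lsym n p \<eta> cl" and ?C = "Cbar n k p \<eta> cl"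
  have Leq: "?L = \<alpha> \<cdot>\<^sub>m 1\<^sub>m n - ?T * ?B * transpose_mat ?T"
    unfolding \<alpha>_def by (rule Lsym_eq[OF vp n2 p0 p1 e0]) (use e1 in simp)
  have Ceq: "?C = \<alpha> \<cdot>\<^sub>m 1\<^sub>m k - ?B" unfolding \<alpha>_def Cbar_def ..
  have T: "?T \<in> carrier_mat n k" unfolding Theta_def by simp
  have TT: "transpose_mat ?T * ?T = 1\<^sub>m k" by (rule ThetaT_Theta[OF vp])
  have B: "?B \<in> carrier_mat k k" by (rule Bbar_carrier)
  obtain ys0 where ys0: "length ys0 = k" "char_poly ?C = (\<Prod>y\<leftarrow>ys0. [:- y, 1:])"
    using sym_char_poly_split[OF Cbar_carrier Cbar_sym] by blast
  define ys where "ys = rev (sort ys0)"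
  have ys_len: "length ys = k" unfolding ys_def using ys0 by simp
  have ys_sorted: "sorted_wrt (\<ge>) ys" unfolding ys_def by (simp add: sorted_wrt_rev)
  have ys_cp: "char_poly ?C = (\<Prod>y\<leftarrow>ys. [:- y, 1:])"
    unfolding ys0(2) by (rule mset_prod_eq) (simp add: ys_def)
  have dC: "dim_row ?C = k" using Cbar_carrier[of n k p \<eta> cl] by auto
  have eigC: "eigs_desc ?C = ys" by (rule eigs_desc_eq) (use ys_len ys_sorted ys_cp dC in auto)
  have RA: "ys ! 0 \<ge> \<alpha>" "ys ! 1 \<le> \<alpha> - 2*c*mn"
  proof -
    have fx: "poly (char_poly ?C) x = (\<Prod>i<k. x - \<alpha> + 2*c*N i) * (1 - c * (\<Sum>i<k. N i / (x - \<alpha> + 2*c*N i)))"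
      if x: "x > \<alpha> - 2*c*mn" for x
    proof -
      have "x - \<alpha> + 2*c*N i \<noteq> 0" if i: "i < k" for i
      proof -
        have "c * mn \<le> c * N i" using mn_le[OF i] c_pos by (simp add: mult_left_mono)
        then show ?thesis using x by linarith
      qed
      then show ?thesis unfolding \<alpha>_def N_def by (intro Cbar_poly[OF vp c_def]) (auto simp: \<alpha>_def N_def)
    qed
    show "ys ! 0 \<ge> \<alpha>" "ys ! 1 \<le> \<alpha> - 2*c*mn"
      by (rule roots_analysis[OF k2 mn_le mn_pos c_pos ys_cp ys_len ys_sorted fx]; assumption)+
  qed
  have nth_le: "ys ! j \<le> ys ! i" if "i \<le> j" "j < k" for i j
  proof (cases "i = j")
    case False
    then have "i < j" using that by simp
    then show ?thesis using sorted_wrt_nth_less[OF ys_sorted, of i j] that ys_len by simp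
  qed simp
  define zs where "zs = ys ! 0 # replicate (n - k) \<alpha> @ drop 1 ys"
  have ys_split: "ys = ys ! 0 # drop 1 ys" using ys_len k2 by (cases ys) auto
  have zs_len: "length zs = n" unfolding zs_def using ys_len kn k2 by simp
  have drop_le: "\<forall>y\<in>set (drop 1 ys). y \<le> ys ! 1"
  proof
    fix y assume "y \<in> set (drop 1 ys)"
    then obtain i where i: "i < length (drop 1 ys)" "y = drop 1 ys ! i" by (auto simp: in_set_conv_nth)
    then have "y = ys ! (1 + i)" using ys_len k2 by simp
    then show "y \<le> ys ! 1" using nth_le[of 1 "1 + i"] i ys_len by simp
  qed
  have pos: "2 * c * mn > 0" using c_pos mn_pos by simp
  have y1: "ys ! 1 < \<alpha>" using RA(2) pos by linarith
  have zs_sorted: "sorted_wrt (\<ge>) zs"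
  proof -
    have s1: "sorted_wrt (\<ge>) (drop 1 ys)" using ys_sorted by (simp add: sorted_wrt_drop)
    have a_gt: "\<forall>y\<in>set (drop 1 ys). y \<le> \<alpha>" using drop_le y1 by fastforce
    have y0: "\<forall>y\<in>set (drop 1 ys). y \<le> ys ! 0" using drop_le nth_le[of 0 1] k2 by force
    have rs: "sorted_wrt (\<ge>) (replicate m \<alpha>)" for m by (induction m) auto
    show ?thesis unfolding zs_def using s1 a_gt y0 RA(1) rs
      by (auto simp: sorted_wrt_append)
  qed
  have L_cp: "char_poly ?L = (\<Prod>y\<leftarrow>zs. [:- y, 1:])"
  proof -
    have "char_poly ?L = [:-\<alpha>, 1:]^(n-k) * char_poly ?C"
      unfolding Leq Ceq by (rule char_poly_lowrank[OF T TT B kn])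
    also have "\<dots> = (\<Prod>y\<leftarrow>zs. [:- y, 1:])"
    proof -
      have z: "(\<Prod>y\<leftarrow>zs. [:- y, 1:]) = [:- (ys!0), 1:] * ([:-\<alpha>, 1:]^(n-k) * (\<Prod>y\<leftarrow>drop 1 ys. [:- y, 1:]))"
        unfolding zs_def by (simp only: list.map prod_list.Cons map_append prod_list.append map_replicate prod_list_replicate)
      have y: "(\<Prod>y\<leftarrow>ys. [:- y, 1:]) = (\<Prod>y\<leftarrow>(ys!0 # drop 1 ys). [:- y, 1:])"
        by (subst (1) ys_split) (rule refl)
      show ?thesis unfolding ys_cp z y by (simp only: list.map prod_list.Cons mult.assoc mult.commute mult.left_commute)
    qed
    finally show ?thesis .
  qed
  have dL: "dim_row ?L = n" unfolding Leq using T B by simp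
  have eigL: "eigs_desc ?L = zs" by (rule eigs_desc_eq) (use zs_len zs_sorted L_cp dL in auto)
  have evals: "eig ?L (n - j) = eig ?C (k - j)" if j: "j < k - 1" for j
  proof -
    have "eig ?L (n - j) = zs ! (n - j - 1)" unfolding eig_def eigL by simp
    also have "\<dots> = drop 1 ys ! (n - j - 1 - 1 - (n - k))" unfolding zs_def
      by (rule nth_zs) (use j kn in simp)
    also have "\<dots> = ys ! (k - j - 1)"
    proof -
      have idx: "1 + (n - j - 1 - 1 - (n - k)) = k - j - 1" using j kn by linarith
      have "drop 1 ys ! (n - j - 1 - 1 - (n - k)) = ys ! (1 + (n - j - 1 - 1 - (n - k)))"
        by (rule nth_drop) (use ys_len k2 in simp)
      then show ?thesis unfolding idx .
    qed
    also have "\<dots> = eig ?C (k - j)" unfolding eig_def eigC by simp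
    finally show ?thesis .
  qed
  have small: "eig ?C (k - j) < \<alpha>" if j: "j < k - 1" for j
  proof -
    have "eig ?C (k - j) = ys ! (k - j - 1)" unfolding eig_def eigC by simp
    also have "\<dots> \<le> ys ! 1" using nth_le[of 1 "k - j - 1"] j by simp
    also have "\<dots> < \<alpha>" by (rule y1)
    finally show ?thesis .
  qed
  have part1: "\<forall>V. is_bottom_eigvecs ?L (k - 1) V \<longleftrightarrow> (\<exists>R. is_bottom_eigvecs ?C (k - 1) R \<and> V = ?T * R)"
  proof
    fix V
    show "is_bottom_eigvecs ?L (k - 1) V \<longleftrightarrow> (\<exists>R. is_bottom_eigvecs ?C (k - 1) R \<and> V = ?T * R)"
    proof -
      have ev': "eig (\<alpha> \<cdot>\<^sub>m 1\<^sub>m n - ?T * ?B * transpose_mat ?T) (n - j) = eig (\<alpha> \<cdot>\<^sub>m 1\<^sub>m k - ?B) (k - j)"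
        if j: "j < k - 1" for j using evals[OF j] unfolding Leq Ceq .
      have ne': "eig (\<alpha> \<cdot>\<^sub>m 1\<^sub>m n - ?T * ?B * transpose_mat ?T) (n - j) \<noteq> \<alpha>"
        if j: "j < k - 1" for j using evals[OF j] small[OF j] unfolding Leq Ceq by simp
      show ?thesis unfolding Leq Ceq by (rule bottom_transfer[OF T TT B ev' ne'])
    qed
  qed
  have top: "eig ?L (n - k + 1) \<ge> \<alpha>"
  proof (cases "n = k")
    case True
    then show ?thesis unfolding eig_def eigL zs_def using RA(1) by simp
  next
    case False
    have "zs ! (n - k) = (replicate (n - k) \<alpha> @ drop 1 ys) ! (n - k - 1)"
      unfolding zs_def using False kn by (simp add: nth_Cons')
    also have "\<dots> = \<alpha>"
    proof -
      have lt: "n - k - 1 < length (replicate (n - k) \<alpha>)" using False kn by simp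
      show ?thesis unfolding nth_append[of "replicate (n - k) \<alpha>"] using lt by simp
    qed
    finally have "zs ! (n - k) = \<alpha>" .
    then show ?thesis unfolding eig_def eigL by simp
  qed
  have bot: "eig ?L (n - k + 2) = ys ! 1"
  proof -
    have "eig ?L (n - k + 2) = zs ! (n - k + 1)" unfolding eig_def eigL by simp
    also have "\<dots> = drop 1 ys ! 0" unfolding zs_def by (subst nth_zs) auto
    finally show ?thesis using ys_len k2 by simp
  qed
  have gap: "eig ?L (n - k + 1) - eig ?L (n - k + 2) \<ge> 2 * c * mn" using top bot RA(2) by simp
  have num: "2 * c * mn \<ge> (1 - 2 * \<eta>) / real k"
  proof -
    define \<rho> where "\<rho> = aspect_ratio n k cl"
    have \<rho>: "\<rho> = mn / mx" unfolding \<rho>_def aspect_ratio_def mn_def mx_def ..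
    have "mn \<le> N 0" "N 0 \<le> mx" using mn_le[of 0] mx_ge[of 0] k2 by auto
    then have mx_pos: "mx > 0" using mn_pos by linarith
    have k16: "4 * real k * (2 + sqrt (real k)) \<ge> 16"
    proof -
      have "4 * real k \<ge> 8" using k2 by simp
      moreover have "2 + sqrt (real k) \<ge> 2" by simp
      ultimately have "4 * real k * (2 + sqrt (real k)) \<ge> 8 * 2" by (intro mult_mono) auto
      then show ?thesis by simp
    qed
    have "1 / (4 * real k * (2 + sqrt (real k))) \<le> 1 / 16"
      using k16 by (intro divide_left_mono) auto
    then have sq: "sqrt \<rho> > 15/16" using assms(8) unfolding \<rho>_def by linarith
    have \<rho>0: "\<rho> \<ge> 0" unfolding \<rho> using mn_pos mx_pos by simp
    have "(15/16)^2 < (sqrt \<rho>)^2" by (rule power_strict_mono) (use sq in auto)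
    then have "\<rho> > (15/16)^2" using \<rho>0 by simp
    then have "\<rho> > 1/2" by (simp add: power2_eq_square)
    then have mnmx: "2 * mn > mx" unfolding \<rho> using mx_pos by (simp add: field_simps)
    have "real n = (\<Sum>i<k. N i)" unfolding N_def using n_sum_csize[OF vp] by (metis of_nat_sum)
    also have "\<dots> \<le> (\<Sum>i<k. mx)" by (rule sum_mono) (use mx_ge in auto)
    finally have "real n \<le> real k * mx" by simp
    moreover have "real k * mx \<le> real k * (2 * mn)" using mnmx by (intro mult_left_mono) auto
    ultimately have nk: "real n - 1 \<le> 2 * real k * mn" by simp
    have n1: "real n - 1 > 0" using n2 by simp
    have kp: "real k > 0" using k2 by simp
    have fr: "1 / real k \<le> 2 * mn / (real n - 1)"
      using nk n1 kp by (simp add: divide_simps mult_ac)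
    have "(1 - 2 * \<eta>) * (1 / real k) \<le> (1 - 2 * \<eta>) * (2 * mn / (real n - 1))"
      by (rule mult_left_mono[OF fr]) (use e1 in simp)
    moreover have "2 * c * mn = (1 - 2 * \<eta>) * (2 * mn / (real n - 1))" unfolding c_eq by (simp add: field_simps)
    moreover have "(1 - 2 * \<eta>) / real k = (1 - 2 * \<eta>) * (1 / real k)" by simp
    ultimately show ?thesis by linarith
  qed
  show ?thesis using part1 gap num by simp
qed


end
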